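(* Let $p\geq 2$ be an integer, and for integers $i\ge 0$ and $0\le r\le p-1$ set \[ \theta(i,r)=\frac{p i^2+(p+2r+2)i+2r+2}{(ip+r+1)(ip+p+r+1)(ip+r+2)(ip+p+r)} . \] Then \[ c_0\!\left(\frac{1}{p}\right)=\frac{p(p-1)(p-2)}{2\pi}\sum_{i\geq 0}\sum_{r=0}^{p-1}\theta(i,r). \]
   Context: For a positive integer $p$ and an integer $q$ with $1\le q\le p-1$ and $\gcd(p,q)=1$, the cotangent sum is $c_0\!\left(\frac{q}{p}\right)=-\sum_{k=1}^{p-1}\frac{k}{p}\cot\frac{\pi k q}{p}$. *)

theory Defs
  imports "HOL-Analysis.Analysis"
begin

definition c0 :: "nat \<Rightarrow> nat \<Rightarrow> real" where
  "c0 q p = - (\<Sum>k = 1..p - 1. (real k / real p) * cot (pi * real k * real q / real p))"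

definition theta :: "nat \<Rightarrow> nat \<Rightarrow> nat \<Rightarrow> real" where
  "theta p i r =
     (real p * real i ^ 2 + (real p + 2 * real r + 2) * real i + 2 * real r + 2) /
     ((real i * real p + real r + 1) * (real i * real p + real p + real r + 1) *
      (real i * real p + real r + 2) * (real i * real p + real p + real r))"

end

theory Submission imports Defs begin

lemma digamma_reflection_complex:
  fixes z :: complex
  assumes z: "z \<notin> \<int>"
  shows "Digamma (1 - z) - Digamma z = of_real pi * cot (of_real pi * z)"
proof -
  have z0: "z \<notin> \<int>\<^sub>\<le>\<^sub>0" using z nonpos_Ints_subset_Ints by blast
  have z1: "1 - z \<notin> \<int>\<^sub>\<le>\<^sub>0"
  proof
    assume "1 - z \<in> \<int>\<^sub>\<le>\<^sub>0"
    hence "1 - z \<in> \<int>" using nonpos_Ints_subset_Ints by blast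
    hence "1 - (1 - z) \<in> \<int>" by (intro Ints_diff) auto
    thus False using z by simp
  qed
  have s: "sin (of_real pi * z) \<noteq> 0"
  proof
    assume "sin (of_real pi * z) = 0"
    then obtain n :: int where "of_real pi * z = of_int n * of_real pi"
      by (auto simp: sin_eq_0)
    hence "z = of_int n" by (simp add: mult.commute)
    thus False using z by auto
  qed
  define f where "f = (\<lambda>z::complex. Gamma z * Gamma (1 - z))"
  define g where "g = (\<lambda>z::complex. of_real pi / sin (of_real pi * z))"
  have fg: "f = g" unfolding f_def g_def by (rule ext, rule Gamma_reflection_complex)
  have df: "(f has_field_derivative (Gamma z * Digamma z * Gamma (1 - z) - Gamma z * (Gamma (1 - z) * Digamma (1 - z)))) (at z)"
    unfolding f_def using z0 z1
    by (auto intro!: derivative_eq_intros)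
  have dg: "(g has_field_derivative (- (of_real pi * (cos (of_real pi * z) * of_real pi)) / (sin (of_real pi * z))^2)) (at z)"
    unfolding g_def using s
    by (auto intro!: derivative_eq_intros simp: power2_eq_square)
  from df have df': "(g has_field_derivative (Gamma z * Digamma z * Gamma (1 - z) - Gamma z * (Gamma (1 - z) * Digamma (1 - z)))) (at z)"
    by (simp add: fg)
  have eq: "Gamma z * Digamma z * Gamma (1 - z) - Gamma z * (Gamma (1 - z) * Digamma (1 - z))
     = - (of_real pi * (cos (of_real pi * z) * of_real pi)) / (sin (of_real pi * z))^2"
    using DERIV_unique[OF df' dg] .
  have fz: "Gamma z * Gamma (1 - z) = of_real pi / sin (of_real pi * z)"
    by (rule Gamma_reflection_complex)
  have "Gamma z * Gamma (1 - z) * (Digamma z - Digamma (1 - z))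
     = - (of_real pi * (cos (of_real pi * z) * of_real pi)) / (sin (of_real pi * z))^2"
    using eq by (simp add: algebra_simps)
  hence "of_real pi / sin (of_real pi * z) * (Digamma z - Digamma (1 - z))
     = - (of_real pi * (cos (of_real pi * z) * of_real pi)) / (sin (of_real pi * z))^2"
    by (simp add: fz)
  also have "- (of_real pi * (cos (of_real pi * z) * of_real pi)) / (sin (of_real pi * z))^2
     = of_real pi / sin (of_real pi * z) * (- of_real pi * cos (of_real pi * z) / sin (of_real pi * z))"
    using s by (simp add: field_simps power2_eq_square)
  finally have "Digamma z - Digamma (1 - z) = - of_real pi * cos (of_real pi * z) / sin (of_real pi * z)"
    using s by (subst (asm) mult_left_cancel) auto
  thus ?thesis by (simp add: cot_def field_simps)
qed

lemma digamma_reflection_real: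
  fixes x :: real
  assumes "0 < x" "x < 1"
  shows "Digamma (1 - x) - Digamma x = pi * cot (pi * x)"
proof -
  have xi: "complex_of_real x \<notin> \<int>"
  proof
    assume "complex_of_real x \<in> \<int>"
    then obtain n :: int where "complex_of_real x = of_int n" by (auto elim: Ints_cases)
    hence "x = of_int n" by (metis of_real_eq_iff of_real_of_int_eq)
    with assms show False by (cases "n \<le> 0") (auto, linarith?)
  qed
  have "complex_of_real (Digamma (1 - x) - Digamma x) = complex_of_real (pi * cot (pi * x))"
    using digamma_reflection_complex[OF xi] assms
    by (simp add: Polygamma_of_real[symmetric] cot_of_real)
  thus ?thesis by (simp only: of_real_eq_iff)
qed


lemma cot_lim:
  fixes x :: real
  assumes "0 < x" "x < 1"
  shows "(\<lambda>m. \<Sum>n<m. (1/(x + real n) - 1/(1 - x + real n))) \<longlonglongrightarrow> pi * cot (pi * x)"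
proof -
  have a: "(\<lambda>m. ln (real m) - (\<Sum>n<m. inverse (x + of_nat n))) \<longlonglongrightarrow> Digamma x"
    using Digamma_LIMSEQ[of x] assms by simp
  have b: "(\<lambda>m. ln (real m) - (\<Sum>n<m. inverse ((1 - x) + of_nat n))) \<longlonglongrightarrow> Digamma (1 - x)"
    using Digamma_LIMSEQ[of "1 - x"] assms by simp
  have "(\<lambda>m. (ln (real m) - (\<Sum>n<m. inverse ((1 - x) + of_nat n))) - (ln (real m) - (\<Sum>n<m. inverse (x + of_nat n))))
        \<longlonglongrightarrow> Digamma (1 - x) - Digamma x"
    by (intro tendsto_diff a b)
  also have "(\<lambda>m. (ln (real m) - (\<Sum>n<m. inverse ((1 - x) + of_nat n))) - (ln (real m) - (\<Sum>n<m. inverse (x + of_nat n))))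
     = (\<lambda>m. \<Sum>n<m. (1/(x + real n) - 1/(1 - x + real n)))"
    by (simp add: sum_subtractf inverse_eq_divide)
  also have "Digamma (1 - x) - Digamma x = pi * cot (pi * x)"
    by (rule digamma_reflection_real[OF assms])
  finally show ?thesis .
qed

definition G :: "nat \<Rightarrow> nat \<Rightarrow> real" where
  "G p n = (\<Sum>k\<in>{1..p-1}. real k / (real n * real p + real p - real k) - real k / (real n * real p + real k))"

lemma G_lim:
  assumes p: "p \<ge> 2"
  shows "(\<lambda>N. \<Sum>n<N. G p n) \<longlonglongrightarrow> pi * c0 1 p"
proof -
  have lim: "(\<lambda>N. \<Sum>k\<in>{1..p-1}. (real k / real p) * - (\<Sum>n<N. (1/(real k / real p + real n) - 1/(1 - real k / real p + real n))))
      \<longlonglongrightarrow> (\<Sum>k\<in>{1..p-1}. (real k / real p) * - (pi * cot (pi * (real k / real p))))"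
  proof (intro tendsto_sum tendsto_mult tendsto_const tendsto_minus cot_lim)
    fix k assume "k \<in> {1..p-1}"
    thus "0 < real k / real p" "real k / real p < 1" using p by auto
  qed
  have e1: "(\<Sum>k\<in>{1..p-1}. (real k / real p) * - (pi * cot (pi * (real k / real p)))) = pi * c0 1 p"
    unfolding c0_def by (simp add: sum_distrib_left mult_ac sum_negf)
  have e2: "(\<lambda>N. \<Sum>k\<in>{1..p-1}. (real k / real p) * - (\<Sum>n<N. (1/(real k / real p + real n) - 1/(1 - real k / real p + real n))))
     = (\<lambda>N. \<Sum>n<N. G p n)"
  proof
    fix N
    have t: "(real k / real p) * - (1/(real k / real p + real n) - 1/(1 - real k / real p + real n))
        = real k / (real n * real p + real p - real k) - real k / (real n * real p + real k)"
      if k: "k \<in> {1..p-1}" for k n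
    proof -
      have pp: "real p > 0" using p by auto
      have k1: "real k \<ge> 1" "real k < real p" using k p by auto
      have d1: "real k / real p + real n = (real n * real p + real k) / real p" using pp by (simp add: field_simps)
      have d2: "1 - real k / real p + real n = (real n * real p + real p - real k) / real p" using pp by (simp add: field_simps)
      have nz1: "real n * real p + real k \<noteq> 0" using k1 pp by (smt (verit) mult_nonneg_nonneg of_nat_0_le_iff)
      have nz2: "real n * real p + real p - real k \<noteq> 0" using k1 pp by (smt (verit) mult_nonneg_nonneg of_nat_0_le_iff)
      have i1: "1/(real k / real p + real n) = real p / (real n * real p + real k)" unfolding d1 by simp
      have i2: "1/(1 - real k / real p + real n) = real p / (real n * real p + real p - real k)" unfolding d2 by simp
      have h: "real k / real p * (real p / a) = real k / a" for a using pp by simp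
      show ?thesis unfolding i1 i2 using p by (simp add: right_diff_distrib h)
    qed
    show "(\<Sum>k\<in>{1..p-1}. (real k / real p) * - (\<Sum>n<N. (1/(real k / real p + real n) - 1/(1 - real k / real p + real n))))
       = (\<Sum>n<N. G p n)"
      unfolding G_def
      by (simp only: sum_distrib_left sum_negf[symmetric] mult_minus_right[symmetric] t sum.swap[of _ "{..<N}"] cong: sum.cong)
  qed
  show ?thesis using lim unfolding e1 e2 .
qed


definition U :: "nat \<Rightarrow> nat \<Rightarrow> real" where
  "U p i = (\<Sum>r<p. 1 / (real i * real p + real r + 1))"

definition R :: "nat \<Rightarrow> nat \<Rightarrow> real" where
  "R p i = real p * real i ^ 2 * U p i - real p * real i - 1 / (real i + 1)
           - ((real p - 1) / 2) / (real i * real p + 1)"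

lemma sum_shift1: "(\<Sum>r<n. f (Suc r)) = (\<Sum>r<n. f r) - f 0 + (f n :: real)"
proof -
  have "(\<Sum>r<n. f (Suc r) - f r) = f n - f 0" by (rule sum_lessThan_telescope)
  thus ?thesis by (simp add: sum_subtractf)
qed

lemma frac_aux4:
  fixes d1 d2 d3 d4 a :: real
  assumes "d1 \<noteq> 0" "d2 \<noteq> 0" "d3 \<noteq> 0" "d4 \<noteq> 0"
  shows "a / d1 = a * (d2 * d3 * d4) * inverse (d1 * d2 * d3 * d4)"
    "a / d2 = a * (d1 * d3 * d4) * inverse (d1 * d2 * d3 * d4)"
    "a / d3 = a * (d1 * d2 * d4) * inverse (d1 * d2 * d3 * d4)"
    "a / d4 = a * (d1 * d2 * d3) * inverse (d1 * d2 * d3 * d4)"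
  using assms by (simp_all add: field_simps)

lemma theta_pf:
  fixes P I Q :: real
  assumes "P \<ge> 2" "I \<ge> 0" "Q \<ge> 0"
  shows "P * (P - 1) * (P - 2) / 2 *
     ((P * I ^ 2 + (P + 2 * Q + 2) * I + 2 * Q + 2) /
     ((I * P + Q + 1) * (I * P + P + Q + 1) * (I * P + Q + 2) * (I * P + P + Q)))
   = P * (P - 2) / 2 * (- I * (I + 1) / (I * P + Q + 1) + (I + 1) * (I + 2) / (I * P + Q + P + 1))
     + P / 2 * (I + 1) * ((P * I + 2) / (I * P + Q + 2) + (2 - 2 * P - P * I) / (I * P + Q + P))"
proof -
  have a: "I * P \<ge> 0" using assms by simp
  define d1 where "d1 = I * P + Q + 1"
  define d2 where "d2 = I * P + Q + P + 1"
  define d3 where "d3 = I * P + Q + 2"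
  define d4 where "d4 = I * P + Q + P"
  have nz: "d1 \<noteq> 0" "d2 \<noteq> 0" "d3 \<noteq> 0" "d4 \<noteq> 0"
    using a assms unfolding d1_def d2_def d3_def d4_def by linarith+
  have D: "(I * P + Q + 1) * (I * P + P + Q + 1) * (I * P + Q + 2) * (I * P + P + Q) = d1 * d2 * d3 * d4"
    unfolding d1_def d2_def d3_def d4_def by (simp add: algebra_simps)
  have poly: "P * (P - 1) * (P - 2) / 2 * (P * I ^ 2 + (P + 2 * Q + 2) * I + 2 * Q + 2)
     = P * (P - 2) / 2 * (- I * (I + 1) * (d2 * d3 * d4) + (I + 1) * (I + 2) * (d1 * d3 * d4))
     + P / 2 * (I + 1) * ((P * I + 2) * (d1 * d2 * d4) + (2 - 2 * P - P * I) * (d1 * d2 * d3))"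
  proof -
    have "P * (P - 1) * (P - 2) * (P * I ^ 2 + (P + 2 * Q + 2) * I + 2 * Q + 2)
     = P * (P - 2) * (- I * (I + 1) * (d2 * d3 * d4) + (I + 1) * (I + 2) * (d1 * d3 * d4))
     + P * (I + 1) * ((P * I + 2) * (d1 * d2 * d4) + (2 - 2 * P - P * I) * (d1 * d2 * d3))"
      unfolding d1_def d2_def d3_def d4_def by (simp add: algebra_simps power2_eq_square)
    thus ?thesis by (simp add: field_simps)
  qed
  define iD where "iD = inverse (d1 * d2 * d3 * d4)"
  have f0: "a / (d1 * d2 * d3 * d4) = a * iD" for a unfolding iD_def by (simp add: divide_inverse)
  have f1: "a / d1 = a * (d2 * d3 * d4) * iD" for a unfolding iD_def by (rule frac_aux4(1)[OF nz])
  have f2: "a / d2 = a * (d1 * d3 * d4) * iD" for a unfolding iD_def by (rule frac_aux4(2)[OF nz])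
  have f3: "a / d3 = a * (d1 * d2 * d4) * iD" for a unfolding iD_def by (rule frac_aux4(3)[OF nz])
  have f4: "a / d4 = a * (d1 * d2 * d3) * iD" for a unfolding iD_def by (rule frac_aux4(4)[OF nz])
  have X: "P * (P - 1) * (P - 2) / 2 *
     ((P * I ^ 2 + (P + 2 * Q + 2) * I + 2 * Q + 2) / (d1 * d2 * d3 * d4))
     = (P * (P - 1) * (P - 2) / 2 * (P * I ^ 2 + (P + 2 * Q + 2) * I + 2 * Q + 2)) * iD"
    unfolding f0 by (simp only: mult.assoc)
  have Y: "P * (P - 2) / 2 * (- I * (I + 1) / d1 + (I + 1) * (I + 2) / d2)
     + P / 2 * (I + 1) * ((P * I + 2) / d3 + (2 - 2 * P - P * I) / d4)
     = (P * (P - 2) / 2 * (- I * (I + 1) * (d2 * d3 * d4) + (I + 1) * (I + 2) * (d1 * d3 * d4))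
     + P / 2 * (I + 1) * ((P * I + 2) * (d1 * d2 * d4) + (2 - 2 * P - P * I) * (d1 * d2 * d3))) * iD"
    by (simp only: f1 f2 f3 f4) (simp add: algebra_simps)
  have "P * (P - 1) * (P - 2) / 2 *
     ((P * I ^ 2 + (P + 2 * Q + 2) * I + 2 * Q + 2) / (d1 * d2 * d3 * d4))
     = P * (P - 2) / 2 * (- I * (I + 1) / d1 + (I + 1) * (I + 2) / d2)
     + P / 2 * (I + 1) * ((P * I + 2) / d3 + (2 - 2 * P - P * I) / d4)"
    unfolding X Y poly ..
  thus ?thesis unfolding D unfolding d1_def d2_def d3_def d4_def .
qed


lemma conv4:
  fixes c e A B C D d1 d2 d3 d4 :: real
  shows "c * (A / d1 + B / d2) + e * (C / d3 + D / d4) = c * A * (1/d1) + c * B * (1/d2) + e * C * (1/d3) + e * D * (1/d4)"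
  by (simp add: divide_inverse ring_distribs mult_ac)

lemma theta_pf':
  assumes "p \<ge> 2"
  shows "real p * (real p - 1) * (real p - 2) / 2 * theta p i r
   = real p * (real p - 2) / 2 * (- real i * (real i + 1)) * (1 / (real i * real p + real r + 1))
     + real p * (real p - 2) / 2 * ((real i + 1) * (real i + 2)) * (1 / (real i * real p + real r + real p + 1))
     + real p / 2 * (real i + 1) * (real p * real i + 2) * (1 / (real i * real p + real r + 2))
     + real p / 2 * (real i + 1) * (2 - 2 * real p - real p * real i) * (1 / (real i * real p + real r + real p))"
proof -
  have "real p \<ge> 2" using assms by simp
  from theta_pf[OF this, of "real i" "real r"] show ?thesis
    unfolding theta_def conv4 by (simp add: algebra_simps)
qed

lemma S2: "(\<Sum>r<p. 1 / (real i * real p + real r + real p + 1)) = U p (Suc i)"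
  unfolding U_def by (intro sum.cong) (simp_all add: algebra_simps)

lemma S3: "(\<Sum>r<p. 1 / (real i * real p + real r + 2)) = U p i - 1 / (real i * real p + 1) + 1 / (real i * real p + real p + 1)"
proof -
  have "(\<Sum>r<p. (\<lambda>r. 1 / (real i * real p + real r + 1)) (Suc r)) =
        (\<Sum>r<p. 1 / (real i * real p + real r + 1)) - 1 / (real i * real p + 0 + 1) + 1 / (real i * real p + real p + 1)"
    using sum_shift1[of "\<lambda>r. 1 / (real i * real p + real r + 1)" p] by simp
  moreover have "(\<Sum>r<p. (\<lambda>r. 1 / (real i * real p + real r + 1)) (Suc r)) = (\<Sum>r<p. 1 / (real i * real p + real r + 2))"
    by (intro sum.cong) (simp_all add: algebra_simps)
  ultimately show ?thesis unfolding U_def by simp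
qed

lemma S4: "(\<Sum>r<p. 1 / (real i * real p + real r + real p)) = U p (Suc i) + 1 / (real i * real p + real p) - 1 / (real i * real p + 2 * real p)"
proof -
  have "(\<Sum>r<p. (\<lambda>r. 1 / (real i * real p + real r + real p)) (Suc r)) =
        (\<Sum>r<p. 1 / (real i * real p + real r + real p)) - 1 / (real i * real p + 0 + real p) + 1 / (real i * real p + real p + real p)"
    using sum_shift1[of "\<lambda>r. 1 / (real i * real p + real r + real p)" p] by simp
  moreover have "(\<Sum>r<p. (\<lambda>r. 1 / (real i * real p + real r + real p)) (Suc r)) = U p (Suc i)"
    unfolding U_def by (intro sum.cong) (simp_all add: algebra_simps)
  ultimately show ?thesis by (simp add: algebra_simps)
qed

lemma sum_theta:
  assumes "p \<ge> 2"
  shows "real p * (real p - 1) * (real p - 2) / 2 * (\<Sum>r<p. theta p i r)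
   = real p * (real p - 2) / 2 * (- real i * (real i + 1)) * U p i
     + real p * (real p - 2) / 2 * ((real i + 1) * (real i + 2)) * U p (Suc i)
     + real p / 2 * (real i + 1) * (real p * real i + 2) * (U p i - 1 / (real i * real p + 1) + 1 / (real i * real p + real p + 1))
     + real p / 2 * (real i + 1) * (2 - 2 * real p - real p * real i) * (U p (Suc i) + 1 / (real i * real p + real p) - 1 / (real i * real p + 2 * real p))"
proof -
  have "real p * (real p - 1) * (real p - 2) / 2 * (\<Sum>r<p. theta p i r)
     = (\<Sum>r<p. real p * (real p - 1) * (real p - 2) / 2 * theta p i r)"
    by (simp add: sum_distrib_left)
  also have "\<dots> = (\<Sum>r<p. real p * (real p - 2) / 2 * (- real i * (real i + 1)) * (1 / (real i * real p + real r + 1))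
     + real p * (real p - 2) / 2 * ((real i + 1) * (real i + 2)) * (1 / (real i * real p + real r + real p + 1))
     + real p / 2 * (real i + 1) * (real p * real i + 2) * (1 / (real i * real p + real r + 2))
     + real p / 2 * (real i + 1) * (2 - 2 * real p - real p * real i) * (1 / (real i * real p + real r + real p)))"
    by (rule sum.cong[OF refl]) (rule theta_pf'[OF assms])
  also have "\<dots> = real p * (real p - 2) / 2 * (- real i * (real i + 1)) * (\<Sum>r<p. 1 / (real i * real p + real r + 1))
     + real p * (real p - 2) / 2 * ((real i + 1) * (real i + 2)) * (\<Sum>r<p. 1 / (real i * real p + real r + real p + 1))
     + real p / 2 * (real i + 1) * (real p * real i + 2) * (\<Sum>r<p. 1 / (real i * real p + real r + 2))
     + real p / 2 * (real i + 1) * (2 - 2 * real p - real p * real i) * (\<Sum>r<p. 1 / (real i * real p + real r + real p))"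
    by (simp only: sum.distrib sum_distrib_left)
  also have "\<dots> = real p * (real p - 2) / 2 * (- real i * (real i + 1)) * U p i
     + real p * (real p - 2) / 2 * ((real i + 1) * (real i + 2)) * U p (Suc i)
     + real p / 2 * (real i + 1) * (real p * real i + 2) * (U p i - 1 / (real i * real p + 1) + 1 / (real i * real p + real p + 1))
     + real p / 2 * (real i + 1) * (2 - 2 * real p - real p * real i) * (U p (Suc i) + 1 / (real i * real p + real p) - 1 / (real i * real p + 2 * real p))"
    by (simp only: S2 S3 S4 U_def[symmetric])
  finally show ?thesis .
qed


lemma G_U:
  assumes p: "p \<ge> 2"
  shows "G p i = (2 * (real i * real p) + real p) * U p i - 2 * real p + 1 / (real i + 1)"
proof -
  define x where "x = real i * real p"
  have x0: "x \<ge> 0" unfolding x_def by simp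
  have pp: "real p > 0" using p by simp
  have "{..<p} = insert 0 {1..p-1}" using p by auto
  hence s0: "(\<Sum>k<p. real k / (x + real p - real k) - real k / (x + real k))
     = (\<Sum>k\<in>{1..p-1}. real k / (x + real p - real k) - real k / (x + real k))"
    by (simp add: sum.insert)
  have a: "(\<Sum>k<p. real k / (x + real p - real k)) = (x + real p) * U p i - real p"
  proof -
    have "(\<Sum>k<p. real k / (x + real p - real k)) = (\<Sum>j<p. real (p - Suc j) / (x + real p - real (p - Suc j)))"
      by (rule sum.nat_diff_reindex[symmetric])
    also have "\<dots> = (\<Sum>j<p. (x + real p) * (1 / (x + real j + 1)) - 1)"
    proof (rule sum.cong[OF refl])
      fix j assume "j \<in> {..<p}"
      hence j: "j < p" by simp
      hence e: "real (p - Suc j) = real p - real j - 1" by (simp add: of_nat_diff)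
      have d: "x + real j + 1 > 0" using x0 by simp
      show "real (p - Suc j) / (x + real p - real (p - Suc j)) = (x + real p) * (1 / (x + real j + 1)) - 1"
        unfolding e using d by (simp add: field_simps)
    qed
    also have "\<dots> = (x + real p) * U p i - real p"
      unfolding U_def x_def by (simp add: sum_subtractf sum_distrib_left)
    finally show ?thesis .
  qed
  have b: "(\<Sum>k<p. real k / (x + real k)) = real p - x * U p i - 1 / (real i + 1)"
  proof -
    have sh: "(\<Sum>k<p. real (Suc k) / (x + real (Suc k))) = (\<Sum>k<p. real k / (x + real k)) - 0 / (x + 0) + real p / (x + real p)"
      using sum_shift1[of "\<lambda>k. real k / (x + real k)" p] by simp
    have "(\<Sum>k<p. real (Suc k) / (x + real (Suc k))) = (\<Sum>k<p. 1 - x * (1 / (x + real k + 1)))"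
    proof (rule sum.cong[OF refl])
      fix k
      have d: "x + real k + 1 > 0" using x0 by simp
      show "real (Suc k) / (x + real (Suc k)) = 1 - x * (1 / (x + real k + 1))"
        using d by (simp add: field_simps)
    qed
    also have "\<dots> = real p - x * U p i"
      unfolding U_def x_def by (simp add: sum_subtractf sum_distrib_left)
    finally have c: "(\<Sum>k<p. real (Suc k) / (x + real (Suc k))) = real p - x * U p i" .
    have xp: "real i * real p + real p > 0" using pp by (simp add: add_nonneg_pos)
    have "real p / (x + real p) = 1 / (real i + 1)"
      unfolding x_def using pp xp by (simp add: field_simps)
    thus ?thesis using sh c by simp
  qed
  have "G p i = (\<Sum>k<p. real k / (x + real p - real k) - real k / (x + real k))"
    unfolding G_def using s0 by (simp add: x_def)
  also have "\<dots> = (x + real p) * U p i - real p - (real p - x * U p i - 1 / (real i + 1))"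
    by (simp only: sum_subtractf a b)
  finally show ?thesis unfolding x_def by (simp add: algebra_simps)
qed

lemma final_alg:
  fixes P I a b x1 x2 x3 x4 z3 z4 h :: real
  assumes "x1 * (I * P + 1) = 1" "x2 * (I * P + P + 1) = 1" "x3 * (I * P + P) = 1" "x4 * (I * P + 2 * P) = 1"
    "z3 * (I + 1) = 1" "z4 * (I + 1 + 1) = 1" "h * 2 = 1"
  shows "P * (P - 2) * h * (- I * (I + 1)) * a
     + P * (P - 2) * h * ((I + 1) * (I + 2)) * b
     + P * h * (I + 1) * (P * I + 2) * (a - x1 + x2)
     + P * h * (I + 1) * (2 - 2 * P - P * I) * (b + x3 - x4)
     = (2 * (I * P) + P) * a - 2 * P + z3
      + (P * I ^ 2 * a - P * I - z3 - (P - 1) * h * x1)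
      - (P * (I + 1) ^ 2 * b - P * (I + 1) - z4 - (P - 1) * h * x2)"
  using assms by algebra

lemma block_identity:
  assumes p: "p \<ge> 2"
  shows "real p * (real p - 1) * (real p - 2) / 2 * (\<Sum>r<p. theta p i r) = G p i + R p i - R p (Suc i)"
proof -
  have pp: "real p > 0" using p by simp
  define a where "a = U p i"
  define b where "b = U p (Suc i)"
  define I where "I = real i"
  define P where "P = real p"
  have P: "P \<ge> 2" unfolding P_def using p by simp
  have I: "I \<ge> 0" unfolding I_def by simp
  have "real p * (real p - 1) * (real p - 2) / 2 * (\<Sum>r<p. theta p i r)
   = P * (P - 2) / 2 * (- I * (I + 1)) * a
     + P * (P - 2) / 2 * ((I + 1) * (I + 2)) * b
     + P / 2 * (I + 1) * (P * I + 2) * (a - 1 / (I * P + 1) + 1 / (I * P + P + 1))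
     + P / 2 * (I + 1) * (2 - 2 * P - P * I) * (b + 1 / (I * P + P) - 1 / (I * P + 2 * P))"
    unfolding sum_theta[OF p] a_def b_def I_def P_def ..
  moreover have "G p i + R p i - R p (Suc i) =
      (2 * (I * P) + P) * a - 2 * P + 1 / (I + 1)
      + (P * I ^ 2 * a - P * I - 1 / (I + 1) - ((P - 1) / 2) / (I * P + 1))
      - (P * (I + 1) ^ 2 * b - P * (I + 1) - 1 / (I + 1 + 1) - ((P - 1) / 2) / ((I + 1) * P + 1))"
    unfolding G_U[OF p] R_def a_def b_def I_def P_def by (simp add: ac_simps)
  moreover have "P * (P - 2) / 2 * (- I * (I + 1)) * a
     + P * (P - 2) / 2 * ((I + 1) * (I + 2)) * b
     + P / 2 * (I + 1) * (P * I + 2) * (a - 1 / (I * P + 1) + 1 / (I * P + P + 1))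
     + P / 2 * (I + 1) * (2 - 2 * P - P * I) * (b + 1 / (I * P + P) - 1 / (I * P + 2 * P))
     = (2 * (I * P) + P) * a - 2 * P + 1 / (I + 1)
      + (P * I ^ 2 * a - P * I - 1 / (I + 1) - ((P - 1) / 2) / (I * P + 1))
      - (P * (I + 1) ^ 2 * b - P * (I + 1) - 1 / (I + 1 + 1) - ((P - 1) / 2) / ((I + 1) * P + 1))"
  proof -
    have IP: "I * P \<ge> 0" using P I by simp
    have n: "I * P + 1 \<noteq> 0" "I * P + P + 1 \<noteq> 0" "I * P + P \<noteq> 0" "I * P + 2 * P \<noteq> 0"
      "I + 1 \<noteq> 0" "I + 1 + 1 \<noteq> 0" using IP P I by linarith+
    have e7: "(I + 1) * P + 1 = I * P + P + 1" by (simp add: algebra_simps)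
    have F: "P * (P - 2) / 2 * (- I * (I + 1)) * a
     + P * (P - 2) / 2 * ((I + 1) * (I + 2)) * b
     + P / 2 * (I + 1) * (P * I + 2) * (a - 1 / (I * P + 1) + 1 / (I * P + P + 1))
     + P / 2 * (I + 1) * (2 - 2 * P - P * I) * (b + 1 / (I * P + P) - 1 / (I * P + 2 * P))
     = (2 * (I * P) + P) * a - 2 * P + 1 / (I + 1)
      + (P * I ^ 2 * a - P * I - 1 / (I + 1) - (P - 1) / 2 * (1 / (I * P + 1)))
      - (P * (I + 1) ^ 2 * b - P * (I + 1) - 1 / (I + 1 + 1) - (P - 1) / 2 * (1 / (I * P + P + 1)))"
      using final_alg[of "1 / (I * P + 1)" I P "1 / (I * P + P + 1)" "1 / (I * P + P)" "1 / (I * P + 2 * P)"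
          "1 / (I + 1)" "1 / (I + 1 + 1)" "1 / 2" a b] n by simp
    show ?thesis unfolding e7 using F by simp
  qed
  ultimately show ?thesis by linarith
qed


lemma theta_bounds:
  assumes p: "p \<ge> 2"
  shows "0 \<le> theta p i r" "theta p i r \<le> 2 / (real i + 1) ^ 2"
proof -
  define I where "I = real i"
  define P where "P = real p"
  define Q where "Q = real r"
  have P: "P \<ge> 2" unfolding P_def using p by simp
  have I: "I \<ge> 0" unfolding I_def by simp
  have Q: "Q \<ge> 0" unfolding Q_def by simp
  have IP: "I * P \<ge> I" using mult_left_mono[of 1 P I] I P by simp
  define N where "N = P * I ^ 2 + (P + 2 * Q + 2) * I + 2 * Q + 2"
  define d1 where "d1 = I * P + Q + 1"
  define d2 where "d2 = I * P + P + Q + 1"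
  define d3 where "d3 = I * P + Q + 2"
  define d4 where "d4 = I * P + P + Q"
  have th: "theta p i r = N / (d1 * d2 * d3 * d4)"
    unfolding theta_def N_def d1_def d2_def d3_def d4_def I_def P_def Q_def ..
  have N0: "N \<ge> 0" unfolding N_def using I P Q by simp
  have d1: "d1 > 0" unfolding d1_def using IP I Q by simp
  have g: "d2 \<ge> I + 1" "d3 \<ge> I + 1" "d4 \<ge> I + 1"
    unfolding d2_def d3_def d4_def using IP I P Q by linarith+
  have I1: "I + 1 > 0" using I by simp
  have D: "d1 * d2 * d3 * d4 \<ge> d1 * (I + 1) ^ 3"
  proof -
    have "(I + 1) * (I + 1) * (I + 1) \<le> d2 * d3 * d4"
      using g I1 by (intro mult_mono) (auto intro: mult_nonneg_nonneg)
    thus ?thesis using d1 by (simp add: power3_eq_cube mult.assoc mult_left_mono)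
  qed
  have Dpos: "d1 * (I + 1) ^ 3 > 0" using d1 I1 by simp
  have Nle: "N \<le> 2 * (I + 1) * d1"
  proof -
    have "2 * (I + 1) * d1 - N = I * I * P + I * P" unfolding N_def d1_def by (simp add: algebra_simps power2_eq_square)
    moreover have "I * I * P + I * P \<ge> 0" using I P by simp
    ultimately show ?thesis by linarith
  qed
  have Dp: "d1 * d2 * d3 * d4 > 0" using D Dpos by linarith
  show "0 \<le> theta p i r" unfolding th using N0 Dp by simp
  have "N / (d1 * d2 * d3 * d4) \<le> 2 * (I + 1) * d1 / (d1 * d2 * d3 * d4)"
    using Nle D Dpos by (intro divide_right_mono) auto
  also have "\<dots> \<le> 2 * (I + 1) * d1 / (d1 * (I + 1) ^ 3)"
    using D Dpos d1 I1 Dp by (intro divide_left_mono) auto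
  also have "\<dots> = 2 / (I + 1) ^ 2"
  proof -
    have nz: "d1 * (I + 1) \<noteq> 0" using d1 I1 by simp
    have "2 * (I + 1) * d1 / (d1 * (I + 1) ^ 3) = (d1 * (I + 1) * 2) / (d1 * (I + 1) * (I + 1) ^ 2)"
      by (simp add: power3_eq_cube power2_eq_square mult_ac)
    also have "\<dots> = 2 / (I + 1) ^ 2" using nz by (rule mult_divide_mult_cancel_left)
    finally show ?thesis .
  qed
  finally show "theta p i r \<le> 2 / (real i + 1) ^ 2" unfolding th I_def .
qed

lemma summable_B:
  assumes p: "p \<ge> 2"
  shows "summable (\<lambda>i. \<Sum>r<p. theta p i r)"
proof (rule summable_comparison_test')
  show "summable (\<lambda>n. 2 * real p * inverse (real n ^ 2))"
    by (intro summable_mult inverse_power_summable) simp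
  fix n :: nat assume n: "n \<ge> 1"
  have "norm (\<Sum>r<p. theta p n r) = (\<Sum>r<p. theta p n r)"
    using theta_bounds(1)[OF p] by (simp add: sum_nonneg)
  also have "\<dots> \<le> (\<Sum>r<p. 2 / (real n + 1) ^ 2)"
    by (intro sum_mono theta_bounds(2)[OF p])
  also have "\<dots> = real p * (2 / (real n + 1) ^ 2)" by simp
  also have "\<dots> \<le> real p * (2 / (real n) ^ 2)"
    using n by (intro mult_left_mono divide_left_mono power_mono) auto
  also have "\<dots> = 2 * real p * inverse (real n ^ 2)" by (simp add: field_simps)
  finally show "norm (\<Sum>r<p. theta p n r) \<le> 2 * real p * inverse (real n ^ 2)" .
qed

lemma lim_rat:
  fixes a b q c :: real
  assumes q: "q > 0" and c: "c \<ge> 0"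
  shows "(\<lambda>N. (a * real N + b) / (q * real N + c)) \<longlonglongrightarrow> a / q"
proof -
  have "(\<lambda>N. (a + b / real N) / (q + c / real N)) \<longlonglongrightarrow> (a + 0) / (q + 0)"
    using q by (intro tendsto_intros) auto
  hence l: "(\<lambda>N. (a + b / real N) / (q + c / real N)) \<longlonglongrightarrow> a / q" by simp
  show ?thesis
  proof (rule Lim_transform_eventually[OF l])
    show "\<forall>\<^sub>F N in sequentially. (a + b / real N) / (q + c / real N) = (a * real N + b) / (q * real N + c)"
      using eventually_gt_at_top[of "0::nat"]
    proof eventually_elim
      case (elim N)
      hence N: "real N > 0" by simp
      have "q * real N > 0" using q N by simp
      hence qc: "q * real N + c \<noteq> 0" using c by linarith
      have e1: "a + b / real N = (a * real N + b) / real N" using N by (simp add: field_simps)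
      have e2: "q + c / real N = (q * real N + c) / real N" using N by (simp add: field_simps)
      show ?case unfolding e1 e2 using N qc by simp
    qed
  qed
qed

lemma R_lim:
  assumes p: "p \<ge> 2"
  shows "(\<lambda>N. R p N) \<longlonglongrightarrow> R p 0"
proof -
  have pp: "real p > 0" using p by simp
  have e: "R p N = - (\<Sum>r<p. (real (Suc r) * real N + 0) / (real p * real N + real (Suc r)))
      - (0 * real N + 1) / (1 * real N + 1) - (0 * real N + (real p - 1) / 2) / (real p * real N + 1)" for N
  proof -
    have "real p * real N ^ 2 * U p N - real p * real N = (\<Sum>r<p. real p * real N ^ 2 * (1 / (real N * real p + real r + 1)) - real N)"
      unfolding U_def by (simp add: sum_subtractf sum_distrib_left)
    also have "\<dots> = (\<Sum>r<p. - ((real (Suc r) * real N + 0) / (real p * real N + real (Suc r))))"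
    proof (rule sum.cong[OF refl])
      fix r
      have d: "real N * real p + real r + 1 > 0" using mult_nonneg_nonneg[of "real N" "real p"] by linarith
      show "real p * real N ^ 2 * (1 / (real N * real p + real r + 1)) - real N =
            - ((real (Suc r) * real N + 0) / (real p * real N + real (Suc r)))"
        using d by (simp add: field_simps power2_eq_square)
    qed
    finally show ?thesis unfolding R_def by (simp add: sum_negf algebra_simps)
  qed
  have "(\<lambda>N. - (\<Sum>r<p. (real (Suc r) * real N + 0) / (real p * real N + real (Suc r)))
      - (0 * real N + 1) / (1 * real N + 1) - (0 * real N + (real p - 1) / 2) / (real p * real N + 1))
      \<longlonglongrightarrow> - (\<Sum>r<p. real (Suc r) / real p) - 0 / 1 - 0 / real p"
    by (intro tendsto_diff tendsto_minus tendsto_sum lim_rat) (use pp in auto)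
  also have "- (\<Sum>r<p. real (Suc r) / real p) - 0 / 1 - 0 / real p = R p 0"
  proof -
    have "(\<Sum>r<p. real (Suc r)) = real p * (real p + 1) / 2"
    proof (induction p)
      case (Suc n) thus ?case by (simp add: field_simps)
    qed simp
    hence "(\<Sum>r<p. real (Suc r) / real p) = (real p + 1) / 2"
      using pp by (simp add: sum_divide_distrib[symmetric] field_simps)
    thus ?thesis unfolding R_def U_def by (simp add: field_simps)
  qed
  finally show ?thesis unfolding e .
qed


theorem proposition2p2:
  fixes p :: nat
  assumes "p \<ge> 2"
  shows "summable (\<lambda>i. \<Sum>r<p. theta p i r) \<and>
         c0 1 p = real p * (real p - 1) * (real p - 2) / (2 * pi) *
                  (\<Sum>i. \<Sum>r<p. theta p i r)"
proof
  define C where "C = real p * (real p - 1) * (real p - 2) / 2"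
  define B where "B = (\<lambda>i. \<Sum>r<p. theta p i r)"
  have sB: "summable B" unfolding B_def by (rule summable_B[OF assms])
  thus "summable (\<lambda>i. \<Sum>r<p. theta p i r)" unfolding B_def .
  have part: "(\<Sum>i<N. C * B i) = (\<Sum>i<N. G p i) + (R p 0 - R p N)" for N
  proof -
    have "(\<Sum>i<N. C * B i) = (\<Sum>i<N. G p i + (R p i - R p (Suc i)))"
      unfolding C_def B_def by (intro sum.cong refl) (use block_identity[OF assms] in \<open>simp add: algebra_simps\<close>)
    also have "\<dots> = (\<Sum>i<N. G p i) + (R p 0 - R p N)"
      by (simp add: sum.distrib sum_lessThan_telescope')
    finally show ?thesis .
  qed
  have l1: "(\<lambda>N. \<Sum>i<N. C * B i) \<longlonglongrightarrow> C * suminf B"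
    unfolding sum_distrib_left[symmetric] by (intro tendsto_mult_left summable_LIMSEQ sB)
  have l2: "(\<lambda>N. \<Sum>i<N. C * B i) \<longlonglongrightarrow> pi * c0 1 p + (R p 0 - R p 0)"
    unfolding part by (intro tendsto_add tendsto_diff tendsto_const G_lim R_lim assms)
  have "C * suminf B = pi * c0 1 p" using LIMSEQ_unique[OF l1 l2] by simp
  thus "c0 1 p = real p * (real p - 1) * (real p - 2) / (2 * pi) * (\<Sum>i. \<Sum>r<p. theta p i r)"
    unfolding C_def B_def by (simp add: field_simps)
qed

end
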